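(* Let $H$ be a Hopf algebra with $S^2=\mathrm{id}$ and let $\tau$ be a Hopf automorphism of $H$ of finite order. Then $\exp_{\tau^{-1}}(H)=\exp_\tau(H)$ (in particular one exists if and only if the other does).
   Context: For a Hopf automorphism $\tau$ of $H$ of finite order and $n$ a multiple of that order, $h^{[n,\tau]}=\sum h_1(\tau\cdot h_2)(\tau^2\cdot h_3)\cdots(\tau^{n-1}\cdot h_n)$ (Sweedler notation). $\exp_\tau(H)$ is the smallest positive integer $n$, if it exists, that is a multiple of the order of $\tau$ and satisfies $h^{[n,\tau]}=\varepsilon(h)1$ for all $h\in H$. *)

theory Defs
  imports Complex_Main
begin

text \<open>An element of H \<otimes> H (resp. H \<otimes> H \<otimes> H) is represented
by a finite list of pairs (triples) of simple tensors; two such lists denote the same tensor iff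
they agree under all products of linear functionals (valid over a field).  The comultiplication
is given as a choice of representative Delta h for each h, i.e. Delta h = sum of h_1 \<otimes> h_2
(Sweedler notation).\<close>

definition teq2 :: "('k::field \<Rightarrow> 'h::ab_group_add \<Rightarrow> 'h) \<Rightarrow> ('h \<times> 'h) list \<Rightarrow> ('h \<times> 'h) list \<Rightarrow> bool" where
  "teq2 sc xs ys \<longleftrightarrow>
     (\<forall>\<phi> \<psi>. Vector_Spaces.linear sc (*) \<phi> \<longrightarrow> Vector_Spaces.linear sc (*) \<psi> \<longrightarrow>
        sum_list (map (\<lambda>(a,b). \<phi> a * \<psi> b) xs) = sum_list (map (\<lambda>(a,b). \<phi> a * \<psi> b) ys))"

definition teq3 :: "('k::field \<Rightarrow> 'h::ab_group_add \<Rightarrow> 'h) \<Rightarrow> ('h \<times> 'h \<times> 'h) list \<Rightarrow> ('h \<times> 'h \<times> 'h) list \<Rightarrow> bool" where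
  "teq3 sc xs ys \<longleftrightarrow>
     (\<forall>\<phi> \<psi> \<chi>. Vector_Spaces.linear sc (*) \<phi> \<longrightarrow> Vector_Spaces.linear sc (*) \<psi> \<longrightarrow> Vector_Spaces.linear sc (*) \<chi> \<longrightarrow>
        sum_list (map (\<lambda>(a,b,c). \<phi> a * \<psi> b * \<chi> c) xs) = sum_list (map (\<lambda>(a,b,c). \<phi> a * \<psi> b * \<chi> c) ys))"

definition hopf_algebra ::
  "('k::field \<Rightarrow> 'h::ring_1 \<Rightarrow> 'h) \<Rightarrow> ('h \<Rightarrow> ('h \<times> 'h) list) \<Rightarrow> ('h \<Rightarrow> 'k) \<Rightarrow> ('h \<Rightarrow> 'h) \<Rightarrow> bool" where
  "hopf_algebra sc \<Delta> \<epsilon> S \<longleftrightarrow>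
     \<comment> \<open>associative unital k-algebra\<close>
     vector_space sc \<and>
     (\<forall>c x y. sc c (x * y) = sc c x * y \<and> sc c (x * y) = x * sc c y) \<and>
     \<comment> \<open>comultiplication is linear\<close>
     (\<forall>x y. teq2 sc (\<Delta> (x + y)) (\<Delta> x @ \<Delta> y)) \<and>
     (\<forall>c x. teq2 sc (\<Delta> (sc c x)) (map (\<lambda>(a,b). (sc c a, b)) (\<Delta> x))) \<and>
     \<comment> \<open>coassociativity\<close>
     (\<forall>h. teq3 sc (concat (map (\<lambda>(a,b). map (\<lambda>(c,d). (c,d,b)) (\<Delta> a)) (\<Delta> h)))
                   (concat (map (\<lambda>(a,b). map (\<lambda>(c,d). (a,c,d)) (\<Delta> b)) (\<Delta> h)))) \<and>
     \<comment> \<open>counit\<close>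
     Vector_Spaces.linear sc (*) \<epsilon> \<and>
     (\<forall>h. sum_list (map (\<lambda>(a,b). sc (\<epsilon> a) b) (\<Delta> h)) = h \<and>
          sum_list (map (\<lambda>(a,b). sc (\<epsilon> b) a) (\<Delta> h)) = h) \<and>
     \<comment> \<open>comultiplication and counit are algebra maps\<close>
     (\<forall>x y. teq2 sc (\<Delta> (x * y)) (concat (map (\<lambda>(a,b). map (\<lambda>(c,d). (a * c, b * d)) (\<Delta> y)) (\<Delta> x)))) \<and>
     teq2 sc (\<Delta> 1) [(1, 1)] \<and>
     (\<forall>x y. \<epsilon> (x * y) = \<epsilon> x * \<epsilon> y) \<and> \<epsilon> 1 = 1 \<and>
     \<comment> \<open>antipode\<close>
     Vector_Spaces.linear sc sc S \<and>
     (\<forall>h. sum_list (map (\<lambda>(a,b). S a * b) (\<Delta> h)) = sc (\<epsilon> h) 1 \<and>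
          sum_list (map (\<lambda>(a,b). a * S b) (\<Delta> h)) = sc (\<epsilon> h) 1)"

definition hopf_automorphism ::
  "('k::field \<Rightarrow> 'h::ring_1 \<Rightarrow> 'h) \<Rightarrow> ('h \<Rightarrow> ('h \<times> 'h) list) \<Rightarrow> ('h \<Rightarrow> 'k) \<Rightarrow> ('h \<Rightarrow> 'h) \<Rightarrow> bool" where
  "hopf_automorphism sc \<Delta> \<epsilon> \<tau> \<longleftrightarrow>
     bij \<tau> \<and> Vector_Spaces.linear sc sc \<tau> \<and> \<tau> 1 = 1 \<and> (\<forall>x y. \<tau> (x * y) = \<tau> x * \<tau> y) \<and>
     (\<forall>h. teq2 sc (\<Delta> (\<tau> h)) (map (\<lambda>(a,b). (\<tau> a, \<tau> b)) (\<Delta> h))) \<and>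
     (\<forall>h. \<epsilon> (\<tau> h) = \<epsilon> h)"

definition fun_order :: "('h \<Rightarrow> 'h) \<Rightarrow> nat" where
  "fun_order \<tau> = (LEAST m. 0 < m \<and> \<tau> ^^ m = id)"

text \<open>Iterated comultiplication: comul_iter n h lists the (n+1)-fold tensors h_1 \<otimes> ... \<otimes> h_(n+1).\<close>
fun comul_iter :: "('h \<Rightarrow> ('h \<times> 'h) list) \<Rightarrow> nat \<Rightarrow> 'h \<Rightarrow> 'h list list" where
  "comul_iter \<Delta> 0 h = [[h]]"
| "comul_iter \<Delta> (Suc n) h = concat (map (\<lambda>(a,b). map (\<lambda>ys. a # ys) (comul_iter \<Delta> n b)) (\<Delta> h))"

definition twisted_power :: "('h \<Rightarrow> ('h \<times> 'h) list) \<Rightarrow> ('h::ring_1 \<Rightarrow> 'h) \<Rightarrow> nat \<Rightarrow> 'h \<Rightarrow> 'h" where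
  "twisted_power \<Delta> \<tau> n h =
     sum_list (map (\<lambda>xs. prod_list (map (\<lambda>i. (\<tau> ^^ i) (xs ! i)) [0..<n])) (comul_iter \<Delta> (n - 1) h))"

definition twisted_exp_cond ::
  "('k::field \<Rightarrow> 'h::ring_1 \<Rightarrow> 'h) \<Rightarrow> ('h \<Rightarrow> ('h \<times> 'h) list) \<Rightarrow> ('h \<Rightarrow> 'k) \<Rightarrow> ('h \<Rightarrow> 'h) \<Rightarrow> nat \<Rightarrow> bool" where
  "twisted_exp_cond sc \<Delta> \<epsilon> \<tau> n \<longleftrightarrow>
     0 < n \<and> fun_order \<tau> dvd n \<and> (\<forall>h. twisted_power \<Delta> \<tau> n h = sc (\<epsilon> h) 1)"

definition twisted_exp ::
  "('k::field \<Rightarrow> 'h::ring_1 \<Rightarrow> 'h) \<Rightarrow> ('h \<Rightarrow> ('h \<times> 'h) list) \<Rightarrow> ('h \<Rightarrow> 'k) \<Rightarrow> ('h \<Rightarrow> 'h) \<Rightarrow> nat option" where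
  "twisted_exp sc \<Delta> \<epsilon> \<tau> =
     (if \<exists>n. twisted_exp_cond sc \<Delta> \<epsilon> \<tau> n then Some (LEAST n. twisted_exp_cond sc \<Delta> \<epsilon> \<tau> n) else None)"

end

theory Submission imports Defs begin

lemma vs_field: "vector_space ((*) :: 'k::field \<Rightarrow> 'k \<Rightarrow> 'k)"
  by unfold_locales (auto simp: algebra_simps)

definition sw :: "('h \<Rightarrow> ('h \<times> 'h) list) \<Rightarrow> ('h \<Rightarrow> 'h \<Rightarrow> 'a::monoid_add) \<Rightarrow> 'h \<Rightarrow> 'a" where
  "sw \<Delta> F h = sum_list (map (\<lambda>(a,b). F a b) (\<Delta> h))"

locale hopf =
  fixes sc :: "'k::field \<Rightarrow> 'h::ring_1 \<Rightarrow> 'h" and \<Delta> :: "'h \<Rightarrow> ('h \<times> 'h) list"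
    and \<epsilon> :: "'h \<Rightarrow> 'k" and S :: "'h \<Rightarrow> 'h"
  assumes H: "hopf_algebra sc \<Delta> \<epsilon> S"
begin

sublocale vector_space sc using H unfolding hopf_algebra_def by auto

definition lin :: "('h \<Rightarrow> 'h) \<Rightarrow> bool" where
  "lin f \<longleftrightarrow> (\<forall>x y. f (x + y) = f x + f y) \<and> (\<forall>c x. f (sc c x) = sc c (f x))"
definition linf :: "('h \<Rightarrow> 'k) \<Rightarrow> bool" where
  "linf f \<longleftrightarrow> (\<forall>x y. f (x + y) = f x + f y) \<and> (\<forall>c x. f (sc c x) = c * f x)"

lemma lin_linear: "lin f \<longleftrightarrow> Vector_Spaces.linear sc sc f"
  unfolding lin_def Vector_Spaces.linear_iff using vector_space_axioms by auto
lemma linf_linear: "linf f \<longleftrightarrow> Vector_Spaces.linear sc (*) f"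
  unfolding linf_def Vector_Spaces.linear_iff using vector_space_axioms vs_field by auto

lemma lin_0: "lin f \<Longrightarrow> f 0 = 0"
  unfolding lin_def by (metis add_cancel_right_right add_0)
lemma linf_0: "linf f \<Longrightarrow> f 0 = 0"
  unfolding linf_def by (metis add_cancel_right_right add_0)

lemma lin_sum_list: "lin f \<Longrightarrow> f (sum_list (map g xs)) = sum_list (map (\<lambda>x. f (g x)) xs)"
  by (induction xs) (auto simp: lin_0, auto simp: lin_def)
lemma linf_sum_list: "linf f \<Longrightarrow> f (sum_list (map g xs)) = sum_list (map (\<lambda>x. f (g x)) xs)"
  by (induction xs) (auto simp: linf_0, auto simp: linf_def)
lemma linf_sum: "linf f \<Longrightarrow> f (sum g A) = sum (\<lambda>x. f (g x)) A"
  by (induction A rule: infinite_finite_induct) (auto simp: linf_0, auto simp: linf_def)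

definition Bs where "Bs = extend_basis {}"
definition crd :: "'h \<Rightarrow> 'h \<Rightarrow> 'k" where "crd b v = representation Bs v b"

lemma Bs: "independent Bs" "span Bs = UNIV"
  unfolding Bs_def using independent_extend_basis[OF independent_empty] span_extend_basis[OF independent_empty] by auto

lemma linf_crd: "linf (crd b)"
  unfolding linf_linear crd_def using linear_representation[OF Bs] .

lemma finite_crd: "finite {b. crd b v \<noteq> 0}"
  unfolding crd_def by (rule finite_representation)

lemma expand: assumes "finite E" "{b. crd b v \<noteq> 0} \<subseteq> E"
  shows "(\<Sum>b\<in>E. sc (crd b v) b) = v"
proof -
  have "(\<Sum>b\<in>E. sc (crd b v) b) = (\<Sum>b | crd b v \<noteq> 0. sc (crd b v) b)"
    by (rule sum.mono_neutral_cong_right) (use assms in auto)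
  also have "\<dots> = v" unfolding crd_def
    by (rule sum_nonzero_representation_eq) (use Bs in auto)
  finally show ?thesis .
qed

lemma SEP: assumes "\<And>\<phi>. linf \<phi> \<Longrightarrow> \<phi> x = \<phi> y" shows "x = y"
proof (rule ccontr)
  assume ne: "x \<noteq> y"
  have "\<exists>b. crd b (x - y) \<noteq> 0"
  proof (rule ccontr)
    assume "\<not> ?thesis"
    then have "{b. crd b (x - y) \<noteq> 0} \<subseteq> {}" by auto
    from expand[OF _ this] ne show False by simp
  qed
  then obtain b where "crd b (x - y) \<noteq> 0" by auto
  moreover have "crd b (x - y) = crd b x - crd b y"
    using linf_crd[of b] unfolding linf_def
    by (metis add_diff_cancel diff_add_cancel add_right_cancel)
  ultimately show False using assms[OF linf_crd] by simp
qed


definition supp where "supp v = {b. crd b v \<noteq> 0}"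
lemma finite_supp: "finite (supp v)" unfolding supp_def by (rule finite_crd)

lemma linf_expand: assumes "linf f" "finite E" "supp v \<subseteq> E"
  shows "f v = (\<Sum>i\<in>E. crd i v * f i)"
proof -
  have "f v = f (\<Sum>b\<in>E. sc (crd b v) b)" using expand[OF assms(2)] assms(3) by (simp add: supp_def)
  also have "\<dots> = (\<Sum>i\<in>E. crd i v * f i)" using assms(1) by (simp add: linf_sum) (simp add: linf_def)
  finally show ?thesis .
qed

lemma sum_list_sum_swap: "sum_list (map (\<lambda>z. \<Sum>i\<in>I. g i z) zs) = (\<Sum>i\<in>I. sum_list (map (g i) zs))"
  by (induction zs) (auto simp: sum.distrib)

definition bilk :: "('h \<Rightarrow> 'h \<Rightarrow> 'k) \<Rightarrow> bool" where
  "bilk B \<longleftrightarrow> (\<forall>b. linf (\<lambda>a. B a b)) \<and> (\<forall>a. linf (B a))"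
definition trilk :: "('h \<Rightarrow> 'h \<Rightarrow> 'h \<Rightarrow> 'k) \<Rightarrow> bool" where
  "trilk T \<longleftrightarrow> (\<forall>b c. linf (\<lambda>a. T a b c)) \<and> (\<forall>a c. linf (\<lambda>b. T a b c)) \<and> (\<forall>a b. linf (T a b))"

lemma G2: assumes B: "bilk B" and E: "finite E" and zs: "\<forall>(a,b)\<in>set zs. supp a \<subseteq> E \<and> supp b \<subseteq> E"
  shows "sum_list (map (\<lambda>(a,b). B a b) zs) =
    (\<Sum>i\<in>E. \<Sum>j\<in>E. B i j * sum_list (map (\<lambda>(a,b). crd i a * crd j b) zs))"
proof -
  have "sum_list (map (\<lambda>(a,b). B a b) zs) = sum_list (map (\<lambda>z. \<Sum>i\<in>E. \<Sum>j\<in>E. B i j * (case z of (a,b) \<Rightarrow> crd i a * crd j b)) zs)"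
  proof (rule arg_cong[where f=sum_list], rule map_cong[OF refl])
    fix z assume "z \<in> set zs"
    then obtain a b where z: "z = (a,b)" "supp a \<subseteq> E" "supp b \<subseteq> E" using zs by auto
    have "B a b = (\<Sum>i\<in>E. crd i a * B i b)" using linf_expand[OF _ E z(2)] B unfolding bilk_def by auto
    also have "\<dots> = (\<Sum>i\<in>E. crd i a * (\<Sum>j\<in>E. crd j b * B i j))"
      using linf_expand[OF _ E z(3)] B unfolding bilk_def by auto
    also have "\<dots> = (\<Sum>i\<in>E. \<Sum>j\<in>E. B i j * (crd i a * crd j b))"
      by (simp add: sum_distrib_left mult_ac)
    finally show "(case z of (a,b) \<Rightarrow> B a b) = (\<Sum>i\<in>E. \<Sum>j\<in>E. B i j * (case z of (a,b) \<Rightarrow> crd i a * crd j b))"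
      using z by simp
  qed
  also have "\<dots> = (\<Sum>i\<in>E. \<Sum>j\<in>E. B i j * sum_list (map (\<lambda>(a,b). crd i a * crd j b) zs))"
    by (simp add: sum_list_sum_swap sum_list_const_mult)
  finally show ?thesis .
qed

lemma G3: assumes T: "trilk T" and E: "finite E" and zs: "\<forall>(a,b,c)\<in>set zs. supp a \<subseteq> E \<and> supp b \<subseteq> E \<and> supp c \<subseteq> E"
  shows "sum_list (map (\<lambda>(a,b,c). T a b c) zs) =
    (\<Sum>i\<in>E. \<Sum>j\<in>E. \<Sum>l\<in>E. T i j l * sum_list (map (\<lambda>(a,b,c). crd i a * crd j b * crd l c) zs))"
proof -
  have "sum_list (map (\<lambda>(a,b,c). T a b c) zs) = sum_list (map (\<lambda>z. \<Sum>i\<in>E. \<Sum>j\<in>E. \<Sum>l\<in>E. T i j l * (case z of (a,b,c) \<Rightarrow> crd i a * crd j b * crd l c)) zs)"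
  proof (rule arg_cong[where f=sum_list], rule map_cong[OF refl])
    fix z assume "z \<in> set zs"
    then obtain a b c where z: "z = (a,b,c)" "supp a \<subseteq> E" "supp b \<subseteq> E" "supp c \<subseteq> E" using zs by auto
    have "T a b c = (\<Sum>i\<in>E. crd i a * T i b c)" using linf_expand[OF _ E z(2)] T unfolding trilk_def by auto
    also have "\<dots> = (\<Sum>i\<in>E. crd i a * (\<Sum>j\<in>E. crd j b * T i j c))"
      using linf_expand[OF _ E z(3)] T unfolding trilk_def by auto
    also have "\<dots> = (\<Sum>i\<in>E. crd i a * (\<Sum>j\<in>E. crd j b * (\<Sum>l\<in>E. crd l c * T i j l)))"
      using linf_expand[OF _ E z(4)] T unfolding trilk_def by auto
    also have "\<dots> = (\<Sum>i\<in>E. \<Sum>j\<in>E. \<Sum>l\<in>E. T i j l * (crd i a * crd j b * crd l c))"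
      by (simp add: sum_distrib_left mult_ac)
    finally show "(case z of (a,b,c) \<Rightarrow> T a b c) = (\<Sum>i\<in>E. \<Sum>j\<in>E. \<Sum>l\<in>E. T i j l * (case z of (a,b,c) \<Rightarrow> crd i a * crd j b * crd l c))"
      using z by simp
  qed
  also have "\<dots> = (\<Sum>i\<in>E. \<Sum>j\<in>E. \<Sum>l\<in>E. T i j l * sum_list (map (\<lambda>(a,b,c). crd i a * crd j b * crd l c) zs))"
    by (simp add: sum_list_sum_swap sum_list_const_mult)
  finally show ?thesis .
qed

lemma M2k: assumes B: "bilk B" and t: "teq2 sc xs ys"
  shows "sum_list (map (\<lambda>(a,b). B a b) xs) = sum_list (map (\<lambda>(a,b). B a b) ys)"
proof -
  define E where "E = (\<Union>v\<in>fst ` set xs \<union> snd ` set xs \<union> fst ` set ys \<union> snd ` set ys. supp v)"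
  have E: "finite E" unfolding E_def by (auto simp: finite_supp)
  have xs: "\<forall>(a,b)\<in>set xs. supp a \<subseteq> E \<and> supp b \<subseteq> E" unfolding E_def by force
  have ys: "\<forall>(a,b)\<in>set ys. supp a \<subseteq> E \<and> supp b \<subseteq> E" unfolding E_def by force
  have "\<And>i j. sum_list (map (\<lambda>(a,b). crd i a * crd j b) xs) = sum_list (map (\<lambda>(a,b). crd i a * crd j b) ys)"
    using t linf_crd unfolding teq2_def linf_linear by blast
  then show ?thesis unfolding G2[OF B E xs] G2[OF B E ys] by simp
qed

lemma M3k: assumes T: "trilk T" and t: "teq3 sc xs ys"
  shows "sum_list (map (\<lambda>(a,b,c). T a b c) xs) = sum_list (map (\<lambda>(a,b,c). T a b c) ys)"
proof -
  define C where "C = (\<lambda>zs::('h\<times>'h\<times>'h) list. fst ` set zs \<union> (fst \<circ> snd) ` set zs \<union> (snd \<circ> snd) ` set zs)"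
  define E where "E = (\<Union>v\<in>C xs \<union> C ys. supp v)"
  have E: "finite E" unfolding E_def C_def by (auto simp: finite_supp)
  have xs: "\<forall>(a,b,c)\<in>set xs. supp a \<subseteq> E \<and> supp b \<subseteq> E \<and> supp c \<subseteq> E" unfolding E_def C_def by force
  have ys: "\<forall>(a,b,c)\<in>set ys. supp a \<subseteq> E \<and> supp b \<subseteq> E \<and> supp c \<subseteq> E" unfolding E_def C_def by force
  have "\<And>i j l. sum_list (map (\<lambda>(a,b,c). crd i a * crd j b * crd l c) xs) = sum_list (map (\<lambda>(a,b,c). crd i a * crd j b * crd l c) ys)"
    using t linf_crd unfolding teq3_def linf_linear by blast
  then show ?thesis unfolding G3[OF T E xs] G3[OF T E ys] by simp
qed


definition bil :: "('h \<Rightarrow> 'h \<Rightarrow> 'h) \<Rightarrow> bool" where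
  "bil B \<longleftrightarrow> (\<forall>b. lin (\<lambda>a. B a b)) \<and> (\<forall>a. lin (\<lambda>b. B a b))"
definition tril :: "('h \<Rightarrow> 'h \<Rightarrow> 'h \<Rightarrow> 'h) \<Rightarrow> bool" where
  "tril T \<longleftrightarrow> (\<forall>b c. lin (\<lambda>a. T a b c)) \<and> (\<forall>a c. lin (\<lambda>b. T a b c)) \<and> (\<forall>a b. lin (\<lambda>c. T a b c))"

lemma bilI: "(\<And>b. lin (\<lambda>a. B a b)) \<Longrightarrow> (\<And>a. lin (\<lambda>b. B a b)) \<Longrightarrow> bil B"
  unfolding bil_def by auto
lemma trilI: "(\<And>b c. lin (\<lambda>a. T a b c)) \<Longrightarrow> (\<And>a c. lin (\<lambda>b. T a b c)) \<Longrightarrow> (\<And>a b. lin (\<lambda>c. T a b c)) \<Longrightarrow> tril T"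
  unfolding tril_def by auto

lemma linf_comp: "linf \<phi> \<Longrightarrow> lin f \<Longrightarrow> linf (\<lambda>x. \<phi> (f x))"
  unfolding linf_def lin_def by auto

lemma linf_sum_list2: "linf \<phi> \<Longrightarrow> \<phi> (sum_list (map (\<lambda>(a,b). F a b) xs)) = sum_list (map (\<lambda>(a,b). \<phi> (F a b)) xs)"
  by (induction xs) (auto simp: linf_0, auto simp: linf_def)
lemma linf_sum_list3: "linf \<phi> \<Longrightarrow> \<phi> (sum_list (map (\<lambda>(a,b,c). F a b c) xs)) = sum_list (map (\<lambda>(a,b,c). \<phi> (F a b c)) xs)"
  by (induction xs) (auto simp: linf_0, auto simp: linf_def)

lemma M2: assumes "bil B" "teq2 sc xs ys"
  shows "sum_list (map (\<lambda>(a,b). B a b) xs) = sum_list (map (\<lambda>(a,b). B a b) ys)"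
proof (rule SEP)
  fix \<phi> assume p: "linf \<phi>"
  have "bilk (\<lambda>a b. \<phi> (B a b))" using assms(1) p unfolding bilk_def bil_def by (auto intro: linf_comp)
  from M2k[OF this assms(2)] show "\<phi> (sum_list (map (\<lambda>(a,b). B a b) xs)) = \<phi> (sum_list (map (\<lambda>(a,b). B a b) ys))"
    by (simp add: linf_sum_list2[OF p])
qed

lemma M3: assumes "tril T" "teq3 sc xs ys"
  shows "sum_list (map (\<lambda>(a,b,c). T a b c) xs) = sum_list (map (\<lambda>(a,b,c). T a b c) ys)"
proof (rule SEP)
  fix \<phi> assume p: "linf \<phi>"
  have "trilk (\<lambda>a b c. \<phi> (T a b c))" using assms(1) p unfolding trilk_def tril_def by (auto intro: linf_comp)
  from M3k[OF this assms(2)] show "\<phi> (sum_list (map (\<lambda>(a,b,c). T a b c) xs)) = \<phi> (sum_list (map (\<lambda>(a,b,c). T a b c) ys))"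
    by (simp add: linf_sum_list3[OF p])
qed

lemma ax_mult: "sc c (x * y) = sc c x * y" "sc c (x * y) = x * sc c y"
  using H unfolding hopf_algebra_def by blast+
lemma sc_comm: "x * sc c y = sc c x * y" using ax_mult by metis
lemma sc1_mult[simp]: "sc c 1 * y = sc c y" using ax_mult(1)[of c 1 y] by simp
lemma mult_sc1[simp]: "y * sc c 1 = sc c y" using ax_mult(2)[of c y 1] by simp
lemma ax_Dadd: "teq2 sc (\<Delta> (x + y)) (\<Delta> x @ \<Delta> y)"
  using H unfolding hopf_algebra_def by auto
lemma ax_Dsc: "teq2 sc (\<Delta> (sc c x)) (map (\<lambda>(a,b). (sc c a, b)) (\<Delta> x))"
  using H unfolding hopf_algebra_def by auto
lemma ax_coassoc: "teq3 sc (concat (map (\<lambda>(a,b). map (\<lambda>(c,d). (c,d,b)) (\<Delta> a)) (\<Delta> h)))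
                   (concat (map (\<lambda>(a,b). map (\<lambda>(c,d). (a,c,d)) (\<Delta> b)) (\<Delta> h)))"
  using H unfolding hopf_algebra_def by auto
lemma linf_eps: "linf \<epsilon>"
  using H unfolding hopf_algebra_def linf_linear by auto
lemma counit: "sw \<Delta> (\<lambda>a b. sc (\<epsilon> a) b) h = h" "sw \<Delta> (\<lambda>a b. sc (\<epsilon> b) a) h = h"
  using H unfolding hopf_algebra_def sw_def by auto
lemma ax_Dmult: "teq2 sc (\<Delta> (x * y)) (concat (map (\<lambda>(a,b). map (\<lambda>(c,d). (a * c, b * d)) (\<Delta> y)) (\<Delta> x)))"
  using H unfolding hopf_algebra_def by auto
lemma ax_D1: "teq2 sc (\<Delta> 1) [(1, 1)]"
  using H unfolding hopf_algebra_def by auto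
lemma eps_mult: "\<epsilon> (x * y) = \<epsilon> x * \<epsilon> y" and eps_1: "\<epsilon> 1 = 1"
  using H unfolding hopf_algebra_def by auto
lemma lin_S: "lin S"
  using H unfolding hopf_algebra_def lin_linear by auto
lemma antipode: "sw \<Delta> (\<lambda>a b. S a * b) h = sc (\<epsilon> h) 1" "sw \<Delta> (\<lambda>a b. a * S b) h = sc (\<epsilon> h) 1"
  using H unfolding hopf_algebra_def sw_def by auto

lemma lin_id: "lin (\<lambda>x. x)" unfolding lin_def by auto
lemma lin_comp: "lin f \<Longrightarrow> lin g \<Longrightarrow> lin (\<lambda>x. f (g x))" unfolding lin_def by auto
lemma lin_mult_l: "lin f \<Longrightarrow> lin (\<lambda>x. f x * z)" unfolding lin_def by (auto simp: distrib_right ax_mult)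
lemma lin_mult_r: "lin f \<Longrightarrow> lin (\<lambda>x. z * f x)" unfolding lin_def by (auto simp: distrib_left ax_mult(1) sc_comm)
lemma lin_scl: "linf \<phi> \<Longrightarrow> lin (\<lambda>x. sc (\<phi> x) z)" unfolding lin_def linf_def by (auto simp: scale_left_distrib)
lemma lin_scr: "lin f \<Longrightarrow> lin (\<lambda>x. sc c (f x))" unfolding lin_def by (auto simp: scale_right_distrib)
lemma lin_sum_list_param: "(\<And>z. z \<in> set xs \<Longrightarrow> lin (\<lambda>x. F x z)) \<Longrightarrow> lin (\<lambda>x. sum_list (map (F x) xs))"
  unfolding lin_def by (induction xs) (auto simp: scale_right_distrib algebra_simps)
lemma lin_sw_param: "(\<And>a b. lin (\<lambda>x. F x a b)) \<Longrightarrow> lin (\<lambda>x. sw \<Delta> (F x) h)"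
  unfolding sw_def by (rule lin_sum_list_param) auto

lemma sl_sc: "sc c (sum_list (map f xs)) = sum_list (map (\<lambda>x. sc c (f x)) xs)"
  by (induction xs) (auto simp: scale_right_distrib)
lemma sw_add: "bil F \<Longrightarrow> sw \<Delta> F (x + y) = sw \<Delta> F x + sw \<Delta> F y"
  unfolding sw_def using M2[OF _ ax_Dadd] by simp
lemma sw_sc: "bil F \<Longrightarrow> sw \<Delta> F (sc c x) = sc c (sw \<Delta> F x)"
proof -
  assume b: "bil F"
  have "sw \<Delta> F (sc c x) = sum_list (map (\<lambda>(a,b). F a b) (map (\<lambda>(a,b). (sc c a, b)) (\<Delta> x)))"
    unfolding sw_def using M2[OF b ax_Dsc] by simp
  also have "\<dots> = sum_list (map (\<lambda>(a,b). sc c (F a b)) (\<Delta> x))"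
    using b unfolding bil_def lin_def by (simp add: o_def case_prod_unfold)
  also have "\<dots> = sc c (sw \<Delta> F x)" unfolding sw_def sl_sc by (simp add: case_prod_unfold)
  finally show ?thesis .
qed
lemma lin_sw: "bil F \<Longrightarrow> lin (sw \<Delta> F)"
  unfolding lin_def using sw_add sw_sc by auto
lemma lin_sw': "bil F \<Longrightarrow> lin (\<lambda>x. sw \<Delta> F x)"
  using lin_sw by (simp add: eta_contract_eq)

lemma lin_sw_pull: "lin f \<Longrightarrow> f (sw \<Delta> F h) = sw \<Delta> (\<lambda>a b. f (F a b)) h"
  unfolding sw_def by (simp add: lin_sum_list case_prod_unfold)
lemma sl_mult_right: "sum_list (map f xs) * (z::'h) = sum_list (map (\<lambda>x. f x * z) xs)"
  by (induction xs) (auto simp: distrib_right)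
lemma sl_mult_left: "(z::'h) * sum_list (map f xs) = sum_list (map (\<lambda>x. z * f x) xs)"
  by (induction xs) (auto simp: distrib_left)
lemma sw_mult_right: "sw \<Delta> (F::'h\<Rightarrow>'h\<Rightarrow>'h) h * z = sw \<Delta> (\<lambda>a b. F a b * z) h"
  unfolding sw_def sl_mult_right by (simp add: case_prod_unfold)
lemma sw_mult_left: "z * sw \<Delta> (F::'h\<Rightarrow>'h\<Rightarrow>'h) h = sw \<Delta> (\<lambda>a b. z * F a b) h"
  unfolding sw_def sl_mult_left by (simp add: case_prod_unfold)
lemma sw_cong: assumes "\<And>a b. F a b = G a b" shows "sw \<Delta> F h = sw \<Delta> G h"
proof -
  have "F = G" using assms by (intro ext)
  then show ?thesis by simp
qed

lemma sw_coassoc: assumes "tril T"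
  shows "sw \<Delta> (\<lambda>a b. sw \<Delta> (\<lambda>c d. T c d b) a) h = sw \<Delta> (\<lambda>a b. sw \<Delta> (\<lambda>c d. T a c d) b) h"
proof -
  have e1: "\<And>zs. sum_list (map (\<lambda>(a,b,c). T a b c) (concat (map (\<lambda>(a,b). map (\<lambda>(c,d). (c,d,b)) (\<Delta> a)) zs)))
     = sum_list (map (\<lambda>(a,b). sw \<Delta> (\<lambda>c d. T c d b) a) zs)"
    subgoal for zs by (induction zs) (auto simp: sw_def o_def case_prod_unfold)
    done
  have e2: "\<And>zs. sum_list (map (\<lambda>(a,b,c). T a b c) (concat (map (\<lambda>(a,b). map (\<lambda>(c,d). (a,c,d)) (\<Delta> b)) zs)))
     = sum_list (map (\<lambda>(a,b). sw \<Delta> (\<lambda>c d. T a c d) b) zs)"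
    subgoal for zs by (induction zs) (auto simp: sw_def o_def case_prod_unfold)
    done
  show ?thesis using M3[OF assms ax_coassoc, of h] unfolding e1 e2 sw_def .
qed

lemma sw_mult: assumes "bil F"
  shows "sw \<Delta> F (x * y) = sw \<Delta> (\<lambda>a b. sw \<Delta> (\<lambda>c d. F (a * c) (b * d)) y) x"
proof -
  have e: "\<And>zs. sum_list (map (\<lambda>(a,b). F a b) (concat (map (\<lambda>(a,b). map (\<lambda>(c,d). (a * c, b * d)) (\<Delta> y)) zs)))
     = sum_list (map (\<lambda>(a,b). sw \<Delta> (\<lambda>c d. F (a * c) (b * d)) y) zs)"
    subgoal for zs by (induction zs) (auto simp: sw_def o_def case_prod_unfold)
    done
  show ?thesis using M2[OF assms ax_Dmult, of x y] unfolding e sw_def .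
qed

lemma sw_one: "bil F \<Longrightarrow> sw \<Delta> F 1 = F 1 1"
  using M2[OF _ ax_D1] unfolding sw_def by simp


definition conv :: "('h \<Rightarrow> 'h) \<Rightarrow> ('h \<Rightarrow> 'h) \<Rightarrow> 'h \<Rightarrow> 'h" where
  "conv f g h = sw \<Delta> (\<lambda>a b. f a * g b) h"
definition u :: "'h \<Rightarrow> 'h" where "u h = sc (\<epsilon> h) 1"

lemma bil_prod: "lin f \<Longrightarrow> lin g \<Longrightarrow> bil (\<lambda>a b. f a * g b)"
  by (intro bilI lin_mult_l lin_mult_r)
lemma lin_conv: "lin f \<Longrightarrow> lin g \<Longrightarrow> lin (conv f g)"
  unfolding conv_def[abs_def] by (rule lin_sw', rule bil_prod)
lemma lin_u: "lin u" unfolding u_def[abs_def] by (rule lin_scl[OF linf_eps])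

lemma conv_assoc: assumes f: "lin f" and g: "lin g" and k: "lin k"
  shows "conv (conv f g) k = conv f (conv g k)"
proof
  fix h
  have "conv (conv f g) k h = sw \<Delta> (\<lambda>a b. sw \<Delta> (\<lambda>c d. f c * g d * k b) a) h"
    unfolding conv_def sw_mult_right ..
  also have "\<dots> = sw \<Delta> (\<lambda>a b. sw \<Delta> (\<lambda>c d. f a * g c * k d) b) h"
    by (rule sw_coassoc) (intro trilI lin_mult_l lin_mult_r f g k)
  also have "\<dots> = conv f (conv g k) h"
    unfolding conv_def sw_mult_left by (simp add: mult.assoc)
  finally show "conv (conv f g) k h = conv f (conv g k) h" .
qed

lemma conv_u_right: assumes f: "lin f" shows "conv f u = f"
proof
  fix h
  have "conv f u h = sw \<Delta> (\<lambda>a b. f (sc (\<epsilon> b) a)) h"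
    unfolding conv_def u_def using f by (simp add: lin_def)
  also have "\<dots> = f h" using lin_sw_pull[OF f, symmetric] counit by simp
  finally show "conv f u h = f h" .
qed

lemma conv_u_left: assumes f: "lin f" shows "conv u f = f"
proof
  fix h
  have "conv u f h = sw \<Delta> (\<lambda>a b. f (sc (\<epsilon> a) b)) h"
    unfolding conv_def u_def using f by (simp add: lin_def)
  also have "\<dots> = f h" using lin_sw_pull[OF f, symmetric] counit by simp
  finally show "conv u f h = f h" .
qed

lemma conv_S_id: "conv S (\<lambda>x. x) = u" "conv (\<lambda>x. x) S = u"
  unfolding conv_def[abs_def] u_def[abs_def] using antipode by auto

lemma inv_unique: assumes "lin f" "lin g" "lin g'" "conv g f = u" "conv f g' = u"
  shows "g = g'"
  by (metis assms conv_assoc conv_u_left conv_u_right)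


lemma bil_l: "bil F \<Longrightarrow> lin (\<lambda>a. F a b)" unfolding bil_def by auto
lemma bil_r: "bil F \<Longrightarrow> lin (\<lambda>b. F a b)" unfolding bil_def by auto
lemma linf_mult1: "linf \<phi> \<Longrightarrow> linf (\<lambda>x. \<phi> x * c)" unfolding linf_def by (auto simp: algebra_simps)
lemma linf_mult2: "linf \<phi> \<Longrightarrow> linf (\<lambda>x. c * \<phi> x)" unfolding linf_def by (auto simp: algebra_simps)

lemma sl_swap: "sum_list (map (\<lambda>x. sum_list (map ((f::_\<Rightarrow>_\<Rightarrow>'h) x) ys)) xs) = sum_list (map (\<lambda>y. sum_list (map (\<lambda>x. f x y) xs)) ys)"
  by (induction xs) (auto simp: sum_list_addf)
lemma sw_swap: "sw \<Delta> (\<lambda>a b. sw \<Delta> (\<lambda>c d. (X a b c d::'h)) y) x = sw \<Delta> (\<lambda>c d. sw \<Delta> (\<lambda>a b. X a b c d) x) y"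
  unfolding sw_def using sl_swap[of "\<lambda>p q. case p of (a,b) \<Rightarrow> case q of (c,d) \<Rightarrow> X a b c d" "\<Delta> y" "\<Delta> x"]
  by (simp add: case_prod_unfold)

lemma cu1: "lin f \<Longrightarrow> sw \<Delta> (\<lambda>a b. sc (\<epsilon> a) (f b)) h = f h"
  using lin_sw_pull[of f "\<lambda>a b. sc (\<epsilon> a) b" h] counit(1)[of h] by (simp add: lin_def)
lemma cu2: "lin f \<Longrightarrow> sw \<Delta> (\<lambda>a b. sc (\<epsilon> b) (f a)) h = f h"
  using lin_sw_pull[of f "\<lambda>a b. sc (\<epsilon> b) a" h] counit(2)[of h] by (simp add: lin_def)

definition bconv :: "('h \<Rightarrow> 'h \<Rightarrow> 'h) \<Rightarrow> ('h \<Rightarrow> 'h \<Rightarrow> 'h) \<Rightarrow> 'h \<Rightarrow> 'h \<Rightarrow> 'h" where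
  "bconv F G x y = sw \<Delta> (\<lambda>a b. sw \<Delta> (\<lambda>c d. F a c * G b d) y) x"
definition bu :: "'h \<Rightarrow> 'h \<Rightarrow> 'h" where "bu x y = sc (\<epsilon> x * \<epsilon> y) 1"

lemma bconv_assoc: assumes F: "bil F" and G: "bil G" and K: "bil K"
  shows "bconv (bconv F G) K x y = bconv F (bconv G K) x y"
proof -
  have "bconv (bconv F G) K x y =
     sw \<Delta> (\<lambda>a b. sw \<Delta> (\<lambda>c d. sw \<Delta> (\<lambda>a1 a2. sw \<Delta> (\<lambda>c1 c2. F a1 c1 * G a2 c2 * K b d) c) a) y) x"
    unfolding bconv_def sw_mult_right ..
  also have "\<dots> = sw \<Delta> (\<lambda>a b. sw \<Delta> (\<lambda>a1 a2. sw \<Delta> (\<lambda>c d. sw \<Delta> (\<lambda>c1 c2. F a1 c1 * G a2 c2 * K b d) c) y) a) x"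
    by (rule sw_cong, rule sw_swap)
  also have "\<dots> = sw \<Delta> (\<lambda>a r. sw \<Delta> (\<lambda>a2 b. sw \<Delta> (\<lambda>c d. sw \<Delta> (\<lambda>c1 c2. F a c1 * G a2 c2 * K b d) c) y) r) x"
    by (rule sw_coassoc)
      (intro trilI lin_sw_param lin_mult_l lin_mult_r bil_l[OF F] bil_l[OF G] bil_l[OF K])
  also have "\<dots> = sw \<Delta> (\<lambda>a r. sw \<Delta> (\<lambda>a2 b. sw \<Delta> (\<lambda>c1 s. sw \<Delta> (\<lambda>c2 d. F a c1 * G a2 c2 * K b d) s) y) r) x"
    by (intro sw_cong sw_coassoc)
      (intro trilI lin_sw_param lin_mult_l lin_mult_r bil_r[OF F] bil_r[OF G] bil_r[OF K])
  also have "\<dots> = sw \<Delta> (\<lambda>a r. sw \<Delta> (\<lambda>c1 s. sw \<Delta> (\<lambda>a2 b. sw \<Delta> (\<lambda>c2 d. F a c1 * G a2 c2 * K b d) s) r) y) x"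
    by (rule sw_cong, rule sw_swap)
  also have "\<dots> = bconv F (bconv G K) x y"
    unfolding bconv_def sw_mult_left by (simp add: mult.assoc)
  finally show ?thesis .
qed

lemma bconv_bu_left: assumes F: "bil F" shows "bconv bu F x y = F x y"
proof -
  have "bconv bu F x y = sw \<Delta> (\<lambda>a b. sw \<Delta> (\<lambda>c d. sc (\<epsilon> c) (sc (\<epsilon> a) (F b d))) y) x"
    unfolding bconv_def bu_def by (simp add: mult.commute)
  also have "\<dots> = sw \<Delta> (\<lambda>a b. sc (\<epsilon> a) (F b y)) x"
    by (intro sw_cong cu1 lin_scr bil_r[OF F])
  also have "\<dots> = F x y" by (intro cu1 bil_l[OF F])
  finally show ?thesis .
qed

lemma bconv_bu_right: assumes F: "bil F" shows "bconv F bu x y = F x y"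
proof -
  have "bconv F bu x y = sw \<Delta> (\<lambda>a b. sw \<Delta> (\<lambda>c d. sc (\<epsilon> d) (sc (\<epsilon> b) (F a c))) y) x"
    unfolding bconv_def bu_def by (simp add: mult.commute)
  also have "\<dots> = sw \<Delta> (\<lambda>a b. sc (\<epsilon> b) (F a y)) x"
    by (intro sw_cong cu2 lin_scr bil_r[OF F])
  also have "\<dots> = F x y" by (intro cu2 bil_l[OF F])
  finally show ?thesis .
qed

lemma S_antimult: "S (x * y) = S y * S x"
proof -
  have b1: "bil (\<lambda>a c. S (a * c))" by (intro bilI lin_comp[OF lin_S] lin_mult_l lin_mult_r lin_id)
  have b2: "bil (\<lambda>b d. S d * S b)" by (intro bilI lin_mult_l lin_mult_r lin_S)
  have bm: "bil (\<lambda>b d. b * d)" by (intro bilI lin_mult_l lin_mult_r lin_id)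
  have e1: "bconv (\<lambda>a c. S (a * c)) (\<lambda>b d. b * d) = bu"
  proof (intro ext)
    fix x y
    have "bconv (\<lambda>a c. S (a * c)) (\<lambda>b d. b * d) x y = sw \<Delta> (\<lambda>u v. S u * v) (x * y)"
      unfolding bconv_def by (rule sw_mult[symmetric]) (intro bilI lin_mult_l lin_mult_r lin_S lin_id)
    also have "\<dots> = bu x y" unfolding bu_def antipode eps_mult ..
    finally show "bconv (\<lambda>a c. S (a * c)) (\<lambda>b d. b * d) x y = bu x y" .
  qed
  have e2: "bconv (\<lambda>b d. b * d) (\<lambda>b d. S d * S b) = bu"
  proof (intro ext)
    fix x y
    have "bconv (\<lambda>b d. b * d) (\<lambda>b d. S d * S b) x y = sw \<Delta> (\<lambda>a b. a * sw \<Delta> (\<lambda>c d. c * S d) y * S b) x"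
      unfolding bconv_def sw_mult_left sw_mult_right by (simp add: mult.assoc)
    also have "\<dots> = sw \<Delta> (\<lambda>a b. sc (\<epsilon> y) (a * S b)) x"
      unfolding antipode by (simp add: ax_mult(1))
    also have "\<dots> = sc (\<epsilon> y) (sw \<Delta> (\<lambda>a b. a * S b) x)"
      by (rule lin_sw_pull[symmetric], rule lin_scr[OF lin_id])
    also have "\<dots> = bu x y" unfolding bu_def antipode by (simp add: mult.commute)
    finally show "bconv (\<lambda>b d. b * d) (\<lambda>b d. S d * S b) x y = bu x y" .
  qed
  have "S y * S x = bconv bu (\<lambda>b d. S d * S b) x y" using bconv_bu_left[OF b2] by simp
  also have "\<dots> = bconv (\<lambda>a c. S (a * c)) (bconv (\<lambda>b d. b * d) (\<lambda>b d. S d * S b)) x y"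
    unfolding e1[symmetric] by (rule bconv_assoc[OF b1 bm b2])
  also have "\<dots> = S (x * y)" unfolding e2 by (rule bconv_bu_right[OF b1])
  finally show ?thesis by simp
qed


lemma bil_lc: "bil F \<Longrightarrow> lin g \<Longrightarrow> lin (\<lambda>a. F (g a) Y)" unfolding bil_def lin_def by auto
lemma bil_rc: "bil F \<Longrightarrow> lin g \<Longrightarrow> lin (\<lambda>a. F X (g a))" unfolding bil_def lin_def by auto
lemma lin_swS: "bil G \<Longrightarrow> lin (\<lambda>p. sw \<Delta> G (S p))"
  using lin_sw[of G] lin_S unfolding lin_def by auto
lemma lin_swc: "bil G \<Longrightarrow> lin g \<Longrightarrow> lin (\<lambda>p. sw \<Delta> G (g p))"
  using lin_sw[of G] unfolding lin_def by auto

lemma DT2: assumes G: "bil G"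
  shows "sw \<Delta> (\<lambda>q1 q2. sw \<Delta> (\<lambda>u v. sw \<Delta> (\<lambda>a b. G (u * S b) (v * S a)) q2) q1) q = sc (\<epsilon> q) (G 1 1)"
proof -
  have "sw \<Delta> (\<lambda>q1 q2. sw \<Delta> (\<lambda>u v. sw \<Delta> (\<lambda>a b. G (u * S b) (v * S a)) q2) q1) q
      = sw \<Delta> (\<lambda>u r. sw \<Delta> (\<lambda>v q2. sw \<Delta> (\<lambda>a b. G (u * S b) (v * S a)) q2) r) q"
    by (rule sw_coassoc) (intro trilI lin_sw_param lin_sw' bilI bil_lc[OF G] bil_rc[OF G] lin_mult_l lin_mult_r lin_id lin_S)
  also have "\<dots> = sw \<Delta> (\<lambda>u r. sw \<Delta> (\<lambda>s b. sw \<Delta> (\<lambda>v a. G (u * S b) (v * S a)) s) r) q"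
    by (intro sw_cong sw_coassoc[symmetric]) (intro trilI bil_lc[OF G] bil_rc[OF G] lin_mult_l lin_mult_r lin_id lin_S)
  also have "\<dots> = sw \<Delta> (\<lambda>u r. sw \<Delta> (\<lambda>s b. sc (\<epsilon> s) (G (u * S b) 1)) r) q"
  proof (intro sw_cong)
    fix u r s b
    have "sw \<Delta> (\<lambda>v a. G (u * S b) (v * S a)) s = G (u * S b) (sw \<Delta> (\<lambda>v a. v * S a) s)"
      by (rule lin_sw_pull[symmetric]) (rule bil_r[OF G])
    also have "\<dots> = sc (\<epsilon> s) (G (u * S b) 1)" unfolding antipode using bil_r[OF G] unfolding lin_def by simp
    finally show "sw \<Delta> (\<lambda>v a. G (u * S b) (v * S a)) s = sc (\<epsilon> s) (G (u * S b) 1)" .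
  qed
  also have "\<dots> = sw \<Delta> (\<lambda>u r. G (u * S r) 1) q"
    by (intro sw_cong cu1 bil_lc[OF G] lin_mult_r lin_S)
  also have "\<dots> = G (sw \<Delta> (\<lambda>u r. u * S r) q) 1"
    by (rule lin_sw_pull[symmetric]) (rule bil_l[OF G])
  also have "\<dots> = sc (\<epsilon> q) (G 1 1)" unfolding antipode using bil_l[OF G] unfolding lin_def by simp
  finally show ?thesis .
qed

lemma T1D: assumes G: "bil G"
  shows "sw \<Delta> (\<lambda>p1 p2. sw \<Delta> (\<lambda>x y. sw \<Delta> (\<lambda>u v. G (x * u) (y * v)) p2) (S p1)) p = sc (\<epsilon> p) (G 1 1)"
proof -
  have "sw \<Delta> (\<lambda>p1 p2. sw \<Delta> (\<lambda>x y. sw \<Delta> (\<lambda>u v. G (x * u) (y * v)) p2) (S p1)) p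
     = sw \<Delta> (\<lambda>p1 p2. sw \<Delta> G (S p1 * p2)) p"
    by (intro sw_cong sw_mult[symmetric] G)
  also have "\<dots> = sw \<Delta> G (sw \<Delta> (\<lambda>p1 p2. S p1 * p2) p)"
    by (rule lin_sw_pull[symmetric]) (rule lin_sw[OF G])
  also have "\<dots> = sc (\<epsilon> p) (G 1 1)" unfolding antipode sw_sc[OF G] sw_one[OF G] ..
  finally show ?thesis .
qed

lemma S_anticomult: assumes F: "bil F" shows "sw \<Delta> F (S h) = sw \<Delta> (\<lambda>a b. F (S b) (S a)) h"
proof -
  have bF: "bil (\<lambda>x' y'. F (x * x') (y * y'))" for x y
    by (intro bilI bil_lc[OF F] bil_rc[OF F] lin_mult_r lin_id)
  define W where "W p1 p2 q = sw \<Delta> (\<lambda>x y. sw \<Delta> (\<lambda>u v. sw \<Delta> (\<lambda>a b. F (x * u * S b) (y * v * S a)) q) p2) (S p1)" for p1 p2 q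
  have bW: "bil (\<lambda>x y. sw \<Delta> (\<lambda>u v. sw \<Delta> (\<lambda>a b. F (x * u * S b) (y * v * S a)) q) p2)" for p2 q
    by (intro bilI lin_sw_param bil_lc[OF F] bil_rc[OF F] lin_mult_l lin_mult_r lin_id lin_S)
  have tW: "tril W" unfolding W_def
    by (intro trilI lin_swS bW lin_sw_param lin_sw' bilI bil_lc[OF F] bil_rc[OF F] lin_mult_l lin_mult_r lin_id lin_S)
  have "sw \<Delta> F (S h) = sw \<Delta> (\<lambda>p q. sc (\<epsilon> q) (sw \<Delta> F (S p))) h"
    by (rule cu2[symmetric]) (rule lin_swS[OF F])
  also have "\<dots> = sw \<Delta> (\<lambda>p q. sw \<Delta> (\<lambda>x y. sc (\<epsilon> q) (F x y)) (S p)) h"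
    by (intro sw_cong lin_sw_pull lin_scr lin_id)
  also have "\<dots> = sw \<Delta> (\<lambda>p q. sw \<Delta> (\<lambda>x y. sw \<Delta> (\<lambda>q1 q2. sw \<Delta> (\<lambda>u v. sw \<Delta> (\<lambda>a b. F (x * (u * S b)) (y * (v * S a))) q2) q1) q) (S p)) h"
    using DT2[OF bF] by simp
  also have "\<dots> = sw \<Delta> (\<lambda>p r. sw \<Delta> (\<lambda>p2 q. W p p2 q) r) h"
    unfolding W_def by (intro sw_cong sw_swap[THEN trans]) (simp add: mult.assoc)
  also have "\<dots> = sw \<Delta> (\<lambda>p q. sw \<Delta> (\<lambda>p1 p2. W p1 p2 q) p) h"
    by (rule sw_coassoc[OF tW, symmetric])
  also have "\<dots> = sw \<Delta> (\<lambda>p q. sc (\<epsilon> p) (sw \<Delta> (\<lambda>a b. F (S b) (S a)) q)) h"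
  proof (intro sw_cong)
    fix p q
    have bG: "bil (\<lambda>x' y'. sw \<Delta> (\<lambda>a b. F (x' * S b) (y' * S a)) q)"
      by (intro bilI lin_sw_param bil_lc[OF F] bil_rc[OF F] lin_mult_l lin_id)
    show "sw \<Delta> (\<lambda>p1 p2. W p1 p2 q) p = sc (\<epsilon> p) (sw \<Delta> (\<lambda>a b. F (S b) (S a)) q)"
      using T1D[OF bG, of p] unfolding W_def by simp
  qed
  also have "\<dots> = sw \<Delta> (\<lambda>a b. F (S b) (S a)) h"
    by (intro cu1 lin_sw' bilI bil_lc[OF F] bil_rc[OF F] lin_S)
  finally show ?thesis .
qed


lemma linf_sw_pull: "linf \<phi> \<Longrightarrow> \<phi> (sw \<Delta> F h) = sw \<Delta> (\<lambda>a b. \<phi> (F a b)) h"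
  unfolding sw_def by (simp add: linf_sum_list case_prod_unfold)

lemma S_1: "S 1 = 1"
proof -
  have "sw \<Delta> (\<lambda>a b. S a * b) 1 = S 1 * 1"
    by (rule sw_one) (intro bilI lin_mult_l lin_mult_r lin_S lin_id)
  then show ?thesis using antipode(1)[of 1] eps_1 by simp
qed

lemma eps_sc1: "\<epsilon> (sc c 1) = c" using linf_eps eps_1 unfolding linf_def by simp

lemma eps_S: "\<epsilon> (S h) = \<epsilon> h"
proof -
  have "\<epsilon> (S h) = \<epsilon> (S (sw \<Delta> (\<lambda>a b. sc (\<epsilon> b) a) h))" using counit(2) by simp
  also have "\<dots> = sw \<Delta> (\<lambda>a b. \<epsilon> b * \<epsilon> (S a)) h"
    using lin_S linf_eps unfolding lin_def linf_def by (simp add: lin_sw_pull[OF lin_S] linf_sw_pull[OF linf_eps])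
  also have "\<dots> = \<epsilon> (sw \<Delta> (\<lambda>a b. S a * b) h)"
    by (simp add: linf_sw_pull[OF linf_eps] eps_mult mult.commute)
  also have "\<dots> = \<epsilon> h" unfolding antipode eps_sc1 ..
  finally show ?thesis .
qed

definition Phi :: "('h \<Rightarrow> 'h) \<Rightarrow> 'h \<Rightarrow> 'h" where "Phi f x = S (f (S x))"

lemma lin_Phi: "lin f \<Longrightarrow> lin (Phi f)"
  unfolding Phi_def[abs_def] using lin_S unfolding lin_def by auto

lemma Phi_conv: assumes f: "lin f" and g: "lin g" shows "Phi (conv f g) = conv (Phi g) (Phi f)"
proof
  fix h
  have "Phi (conv f g) h = S (sw \<Delta> (\<lambda>a b. f (S b) * g (S a)) h)"
    unfolding Phi_def conv_def by (subst S_anticomult) (auto intro: bil_prod f g)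
  also have "\<dots> = conv (Phi g) (Phi f) h"
    unfolding conv_def Phi_def lin_sw_pull[OF lin_S] S_antimult ..
  finally show "Phi (conv f g) h = conv (Phi g) (Phi f) h" .
qed

lemma Phi_u: "Phi u = u"
  unfolding Phi_def[abs_def] u_def[abs_def] using lin_S unfolding lin_def by (auto simp: eps_S S_1)


definition TS :: "(nat \<Rightarrow> 'h \<Rightarrow> 'h) \<Rightarrow> nat \<Rightarrow> 'h \<Rightarrow> 'h" where
  "TS \<phi> m h = sum_list (map (\<lambda>xs. prod_list (map (\<lambda>i. \<phi> i (xs ! i)) [0..<Suc m])) (comul_iter \<Delta> m h))"

lemma TS_0: "TS \<phi> 0 = \<phi> 0"
  unfolding TS_def[abs_def] by simp

lemma TS_Suc: "TS \<phi> (Suc m) = conv (\<phi> 0) (TS (\<lambda>i. \<phi> (Suc i)) m)"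
proof
  fix h
  have up: "[0..<Suc (Suc m)] = 0 # map Suc [0..<Suc m]"
    by (simp only: upt_conv_Cons[of 0 "Suc (Suc m)"] map_Suc_upt)
  have "\<And>zs. sum_list (map (\<lambda>xs. prod_list (map (\<lambda>i. \<phi> i (xs ! i)) [0..<Suc (Suc m)]))
        (concat (map (\<lambda>(a,b). map (\<lambda>ys. a # ys) (comul_iter \<Delta> m b)) zs)))
      = sum_list (map (\<lambda>(a,b). \<phi> 0 a * TS (\<lambda>i. \<phi> (Suc i)) m b) zs)"
    subgoal for zs
      by (induction zs) (auto simp del: upt_Suc simp add: up TS_def sl_mult_left o_def)
    done
  then show "TS \<phi> (Suc m) h = conv (\<phi> 0) (TS (\<lambda>i. \<phi> (Suc i)) m) h"
    unfolding conv_def sw_def by (simp add: TS_def[of \<phi> "Suc m"])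
qed

lemma TS_cong: "(\<And>i. i \<le> m \<Longrightarrow> \<phi> i = \<psi> i) \<Longrightarrow> TS \<phi> m = TS \<psi> m"
  unfolding TS_def[abs_def] by (intro ext arg_cong[where f=sum_list] map_cong arg_cong[where f=prod_list]) auto

lemma lin_TS: "(\<And>i. i \<le> m \<Longrightarrow> lin (\<phi> i)) \<Longrightarrow> lin (TS \<phi> m)"
proof (induction m arbitrary: \<phi>)
  case 0 then show ?case by (simp add: TS_0)
next
  case (Suc m)
  have "lin (TS (\<lambda>i. \<phi> (Suc i)) m)" by (rule Suc.IH) (use Suc.prems in auto)
  then show ?case unfolding TS_Suc using Suc.prems by (intro lin_conv) auto
qed

lemma TS_Suc_right: "(\<And>i. i \<le> Suc m \<Longrightarrow> lin (\<phi> i)) \<Longrightarrow> TS \<phi> (Suc m) = conv (TS \<phi> m) (\<phi> (Suc m))"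
proof (induction m arbitrary: \<phi>)
  case 0 then show ?case by (simp add: TS_Suc TS_0)
next
  case (Suc m)
  have IH: "TS (\<lambda>i. \<phi> (Suc i)) (Suc m) = conv (TS (\<lambda>i. \<phi> (Suc i)) m) (\<phi> (Suc (Suc m)))"
    by (rule Suc.IH) (use Suc.prems in auto)
  have l: "lin (TS (\<lambda>i. \<phi> (Suc i)) m)" by (rule lin_TS) (use Suc.prems in auto)
  show ?case
    unfolding TS_Suc[of \<phi> "Suc m"] IH TS_Suc[of \<phi> m]
    by (rule conv_assoc[symmetric]) (use Suc.prems l in auto)
qed

lemma Phi_TS: "(\<And>i. i \<le> m \<Longrightarrow> lin (\<phi> i)) \<Longrightarrow> Phi (TS \<phi> m) = TS (\<lambda>i. Phi (\<phi> (m - i))) m"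
proof (induction m arbitrary: \<phi>)
  case 0 then show ?case by (simp add: TS_0)
next
  case (Suc m)
  have IH: "Phi (TS (\<lambda>i. \<phi> (Suc i)) m) = TS (\<lambda>i. Phi (\<phi> (Suc (m - i)))) m"
    by (rule Suc.IH) (use Suc.prems in auto)
  have l: "lin (TS (\<lambda>i. \<phi> (Suc i)) m)" by (rule lin_TS) (use Suc.prems in auto)
  have "Phi (TS \<phi> (Suc m)) = conv (TS (\<lambda>i. Phi (\<phi> (Suc (m - i)))) m) (Phi (\<phi> 0))"
    unfolding TS_Suc Phi_conv[OF Suc.prems[of 0] l, simplified] IH ..
  also have "\<dots> = conv (TS (\<lambda>i. Phi (\<phi> (Suc m - i))) m) (Phi (\<phi> (Suc m - Suc m)))"
    by (simp add: TS_cong[of m "\<lambda>i. Phi (\<phi> (Suc (m - i)))" "\<lambda>i. Phi (\<phi> (Suc m - i))"] Suc_diff_le)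
  also have "\<dots> = TS (\<lambda>i. Phi (\<phi> (Suc m - i))) (Suc m)"
    by (rule TS_Suc_right[symmetric]) (use Suc.prems in \<open>auto intro: lin_Phi\<close>)
  finally show ?case .
qed

lemma rotate: assumes X: "lin X" and e: "conv X (\<lambda>x. x) = u" shows "conv (\<lambda>x. x) X = u"
proof -
  have "conv (\<lambda>x. x) X = conv (conv (\<lambda>x. x) X) (conv (\<lambda>x. x) S)"
    using conv_S_id(2) conv_u_right[OF lin_conv[OF lin_id X]] by simp
  also have "\<dots> = conv (conv (conv (\<lambda>x. x) X) (\<lambda>x. x)) S"
    by (rule conv_assoc[symmetric]) (intro lin_conv lin_id X lin_S)+
  also have "\<dots> = conv (conv (\<lambda>x. x) (conv X (\<lambda>x. x))) S"
    using conv_assoc[OF lin_id X lin_id] by simp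
  also have "\<dots> = u" unfolding e conv_u_right[OF lin_id] conv_S_id(2) ..
  finally show ?thesis .
qed

lemma ROT: assumes l: "\<And>i. lin (g i)" and P: "\<And>i. Phi (g i) = g i" and g0: "g 0 = (\<lambda>x. x)"
  and l': "\<And>i. lin (g' i)" and g'0: "g' 0 = (\<lambda>x. x)" and gg: "\<And>j. 1 \<le> j \<Longrightarrow> j \<le> m \<Longrightarrow> g' j = g (Suc m - j)"
  and T: "TS g m = u"
  shows "TS g' m = u"
proof (cases m)
  case 0
  then show ?thesis using T g0 g'0 by (simp add: TS_0)
next
  case (Suc k)
  have "u = Phi (TS g m)" using T Phi_u by simp
  also have "\<dots> = TS (\<lambda>i. g (m - i)) m" using Phi_TS[of m g] l P by simp
  also have "\<dots> = conv (TS (\<lambda>i. g (m - i)) k) (\<lambda>x. x)"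
    unfolding Suc by (subst TS_Suc_right) (auto simp: l g0)
  finally have "conv (\<lambda>x. x) (TS (\<lambda>i. g (m - i)) k) = u"
    by (intro rotate lin_TS l) simp
  moreover have "TS g' m = conv (\<lambda>x. x) (TS (\<lambda>i. g (m - i)) k)"
    unfolding Suc TS_Suc g'0 using gg Suc by (auto intro!: arg_cong[where f="conv _"] TS_cong)
  ultimately show ?thesis by simp
qed

end

locale hopf2 = hopf sc \<Delta> \<epsilon> S for sc :: "'k::field \<Rightarrow> 'h::ring_1 \<Rightarrow> 'h" and \<Delta> \<epsilon> S +
  fixes \<tau> :: "'h \<Rightarrow> 'h"
  assumes A: "hopf_automorphism sc \<Delta> \<epsilon> \<tau>" and SS: "\<And>h. S (S h) = h"
begin

lemma bij_tau: "bij \<tau>" using A unfolding hopf_automorphism_def by auto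
lemma lin_tau: "lin \<tau>" using A unfolding hopf_automorphism_def lin_linear by auto
lemma tau_mult: "\<tau> (x * y) = \<tau> x * \<tau> y" using A unfolding hopf_automorphism_def by auto
lemma tau_1: "\<tau> 1 = 1" using A unfolding hopf_automorphism_def by auto
lemma eps_tau: "\<epsilon> (\<tau> h) = \<epsilon> h" using A unfolding hopf_automorphism_def by auto
lemma tau_coalg: assumes "bil F" shows "sw \<Delta> F (\<tau> h) = sw \<Delta> (\<lambda>a b. F (\<tau> a) (\<tau> b)) h"
proof -
  have "teq2 sc (\<Delta> (\<tau> h)) (map (\<lambda>(a,b). (\<tau> a, \<tau> b)) (\<Delta> h))" using A unfolding hopf_automorphism_def by auto
  from M2[OF assms this] show ?thesis unfolding sw_def by (simp add: o_def case_prod_unfold)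
qed

lemma S_tau: "S (\<tau> x) = \<tau> (S x)"
proof -
  have l1: "lin (\<lambda>x. S (\<tau> x))" "lin (\<lambda>x. \<tau> (S x))" using lin_comp[OF lin_S lin_tau] lin_comp[OF lin_tau lin_S] by auto
  have e1: "conv (\<lambda>x. S (\<tau> x)) \<tau> = u"
  proof
    fix h
    have "conv (\<lambda>x. S (\<tau> x)) \<tau> h = sw \<Delta> (\<lambda>a b. S a * b) (\<tau> h)"
      unfolding conv_def by (rule tau_coalg[symmetric]) (intro bilI lin_mult_l lin_mult_r lin_S lin_id)
    then show "conv (\<lambda>x. S (\<tau> x)) \<tau> h = u h" unfolding antipode u_def eps_tau .
  qed
  have e2: "conv \<tau> (\<lambda>x. \<tau> (S x)) = u"
  proof
    fix h
    have "conv \<tau> (\<lambda>x. \<tau> (S x)) h = \<tau> (sw \<Delta> (\<lambda>a b. a * S b) h)"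
      unfolding conv_def lin_sw_pull[OF lin_tau] tau_mult ..
    then show "conv \<tau> (\<lambda>x. \<tau> (S x)) h = u h" unfolding antipode u_def
      using lin_tau tau_1 unfolding lin_def by simp
  qed
  have "(\<lambda>x. S (\<tau> x)) = (\<lambda>x. \<tau> (S x))" by (rule inv_unique[OF lin_tau l1 e1 e2])
  then show ?thesis by metis
qed

lemma sig_tau: "inv \<tau> (\<tau> x) = x" "\<tau> (inv \<tau> x) = x"
  using bij_tau by (simp_all add: bij_is_inj inv_f_f bij_is_surj surj_f_inv_f)

lemma pow_cancel1: "(inv \<tau> ^^ j) ((\<tau> ^^ j) x) = x"
proof (induction j arbitrary: x)
  case 0 then show ?case by simp
next
  case (Suc j)
  show ?case unfolding funpow_Suc_right[where f="inv \<tau>"] by (simp add: sig_tau Suc.IH)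
qed
lemma pow_cancel2: "(\<tau> ^^ j) ((inv \<tau> ^^ j) x) = x"
proof (induction j arbitrary: x)
  case 0 then show ?case by simp
next
  case (Suc j)
  show ?case unfolding funpow_Suc_right[where f="\<tau>"] by (simp add: sig_tau Suc.IH)
qed

lemma pow_id_iff: "(inv \<tau> ^^ m = id) \<longleftrightarrow> (\<tau> ^^ m = id)"
proof
  assume "inv \<tau> ^^ m = id"
  then show "\<tau> ^^ m = id" using pow_cancel2[of m] by (metis id_apply ext)
next
  assume "\<tau> ^^ m = id"
  then show "inv \<tau> ^^ m = id" using pow_cancel1[of m] by (metis id_apply ext)
qed

lemma K: assumes "j \<le> N" "\<tau> ^^ N = id" shows "inv \<tau> ^^ (N - j) = \<tau> ^^ j"
proof
  fix x
  have "(\<tau> ^^ N) x = (\<tau> ^^ (N - j)) ((\<tau> ^^ j) x)"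
    using assms(1) funpow_add[of "N - j" j \<tau>] by simp
  then have "(inv \<tau> ^^ (N - j)) x = (inv \<tau> ^^ (N - j)) ((\<tau> ^^ (N - j)) ((\<tau> ^^ j) x))"
    using assms(2) by simp
  then show "(inv \<tau> ^^ (N - j)) x = (\<tau> ^^ j) x" by (simp add: pow_cancel1)
qed

lemma lin_sig: "lin (inv \<tau>)"
  using lin_tau sig_tau unfolding lin_def by metis

lemma S_sig: "S (inv \<tau> x) = inv \<tau> (S x)"
proof -
  have "\<tau> (S (inv \<tau> x)) = S x" using S_tau[of "inv \<tau> x"] sig_tau by simp
  then show ?thesis using sig_tau by metis
qed

lemma lin_pow: "lin f \<Longrightarrow> lin (f ^^ i)"
  by (induction i) (auto simp: lin_id[unfolded id_def[symmetric]] id_def lin_def)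

lemma S_pow: "(\<And>x. S (f x) = f (S x)) \<Longrightarrow> S ((f ^^ i) x) = (f ^^ i) (S x)"
  by (induction i) auto

lemma Phi_pow: "(\<And>x. S (f x) = f (S x)) \<Longrightarrow> Phi (f ^^ i) = f ^^ i"
  unfolding Phi_def[abs_def] by (auto simp: S_pow SS)

lemma tp: "0 < n \<Longrightarrow> twisted_power \<Delta> f n h = TS (\<lambda>i. f ^^ i) (n - 1) h"
  unfolding twisted_power_def TS_def by simp

lemma transfer1: assumes N: "0 < N" "\<tau> ^^ N = id" and T: "\<forall>h. twisted_power \<Delta> \<tau> N h = u h"
  shows "\<forall>h. twisted_power \<Delta> (inv \<tau>) N h = u h"
proof -
  have "TS (\<lambda>i. \<tau> ^^ i) (N - 1) = u" using T N by (auto simp: tp)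
  then have "TS (\<lambda>i. inv \<tau> ^^ i) (N - 1) = u"
  proof (rule ROT[rotated -1])
    show "lin (\<tau> ^^ i)" "lin (inv \<tau> ^^ i)" for i by (intro lin_pow lin_tau lin_sig)+
    show "Phi (\<tau> ^^ i) = \<tau> ^^ i" for i by (intro Phi_pow S_tau)
    show "(\<tau> ^^ 0) = (\<lambda>x. x)" "(inv \<tau> ^^ 0) = (\<lambda>x. x)" by auto
    show "inv \<tau> ^^ j = \<tau> ^^ (Suc (N - 1) - j)" if "1 \<le> j" "j \<le> N - 1" for j
      using K[of "N - j" N] that N by auto
  qed
  then show ?thesis using N by (auto simp: tp)
qed

lemma transfer2: assumes N: "0 < N" "\<tau> ^^ N = id" and T: "\<forall>h. twisted_power \<Delta> (inv \<tau>) N h = u h"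
  shows "\<forall>h. twisted_power \<Delta> \<tau> N h = u h"
proof -
  have "TS (\<lambda>i. inv \<tau> ^^ i) (N - 1) = u" using T N by (auto simp: tp)
  then have "TS (\<lambda>i. \<tau> ^^ i) (N - 1) = u"
  proof (rule ROT[rotated -1])
    show "lin (\<tau> ^^ i)" "lin (inv \<tau> ^^ i)" for i by (intro lin_pow lin_tau lin_sig)+
    show "Phi (inv \<tau> ^^ i) = inv \<tau> ^^ i" for i by (intro Phi_pow S_sig)
    show "(\<tau> ^^ 0) = (\<lambda>x. x)" "(inv \<tau> ^^ 0) = (\<lambda>x. x)" by auto
    show "\<tau> ^^ j = inv \<tau> ^^ (Suc (N - 1) - j)" if "1 \<le> j" "j \<le> N - 1" for j
      using K[of j N] that N by auto
  qed
  then show ?thesis using N by (auto simp: tp)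
qed

end

theorem corollary3p5:
  fixes sc :: "'k::field \<Rightarrow> 'h::ring_1 \<Rightarrow> 'h"
    and \<Delta> :: "'h \<Rightarrow> ('h \<times> 'h) list"
    and \<epsilon> :: "'h \<Rightarrow> 'k"
    and S \<tau> :: "'h \<Rightarrow> 'h"
  assumes "hopf_algebra sc \<Delta> \<epsilon> S"
    and "\<forall>h. S (S h) = h"
    and "hopf_automorphism sc \<Delta> \<epsilon> \<tau>"
    and "\<exists>m>0. \<tau> ^^ m = id"
  shows "twisted_exp sc \<Delta> \<epsilon> (inv \<tau>) = twisted_exp sc \<Delta> \<epsilon> \<tau>"
proof -
  interpret hopf2 sc \<Delta> \<epsilon> S \<tau> using assms by unfold_locales auto
  have fo: "fun_order (inv \<tau>) = fun_order \<tau>" unfolding fun_order_def using pow_id_iff by simp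
  have fo_id: "\<tau> ^^ fun_order \<tau> = id"
    unfolding fun_order_def using LeastI_ex[OF assms(4)] by simp
  have pw: "\<tau> ^^ n = id" if d: "fun_order \<tau> dvd n" for n
  proof -
    obtain k where nk: "n = fun_order \<tau> * k" using d by (auto elim: dvdE)
    have idk: "(id::'h\<Rightarrow>'h) ^^ k = id" by (induction k) auto
    show ?thesis using nk fo_id funpow_mult[where f=\<tau> and m="fun_order \<tau>" and n=k] idk by metis
  qed
  have "twisted_exp_cond sc \<Delta> \<epsilon> (inv \<tau>) n \<longleftrightarrow> twisted_exp_cond sc \<Delta> \<epsilon> \<tau> n" for n
    unfolding twisted_exp_cond_def fo u_def[symmetric]
    using transfer1[of n] transfer2[of n] pw[of n] by blast
  then have "twisted_exp_cond sc \<Delta> \<epsilon> (inv \<tau>) = twisted_exp_cond sc \<Delta> \<epsilon> \<tau>" by (intro ext)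
  then show ?thesis unfolding twisted_exp_def by simp
qed

end
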